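(* For every integer $n\geq2$, $\mathcal{M}^{\perp}\cap HC(W_n^{*})=\varnothing$.
   Context: $H^2$ denotes the Hardy space of analytic functions $f(z)=\sum_{j\ge0}\hat f(j)z^j$ on the open unit disk $\mathbb{D}$ with $\sum_{j}|\hat f(j)|^2<\infty$. For $n\in\mathbb{N}$, $W_n$ is the bounded operator on $H^2$ given by $W_nf(z)=(1+z+\cdots+z^{n-1})f(z^n)$, $W_n^{*}$ is its adjoint, and $HC(W_n^{*})$ is the set of vectors with dense orbit under $W_n^{*}$. For each integer $k\geq2$, $h_k(z)=\frac{1}{1-z}\log\left(\frac{1+z+\cdots+z^{k-1}}{k}\right)$ (holomorphic branch of the logarithm on $\mathbb{D}$, real at $z=0$), which lies in $H^2$; $\mathcal{M}=\mathrm{span}\{h_k-h_\ell:k,\ell\geq2\}$ and $\mathcal{M}^\perp$ is its orthogonal complement in $H^2$. *)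

theory Defs
  imports "HOL-Complex_Analysis.Complex_Analysis"
begin

text \<open>Elements of H^2 are identified with their Taylor coefficient sequences
  f = (hat f 0, hat f 1, ...), the function being z |-> sum_j hat f j * z^j on the unit disk.\<close>

definition H2 :: "(nat \<Rightarrow> complex) set" where
  "H2 = {a. summable (\<lambda>j. (cmod (a j))^2)}"

definition h2_inner :: "(nat \<Rightarrow> complex) \<Rightarrow> (nat \<Rightarrow> complex) \<Rightarrow> complex" where
  "h2_inner a b = (\<Sum>j. a j * cnj (b j))"

definition h2_norm :: "(nat \<Rightarrow> complex) \<Rightarrow> real" where
  "h2_norm a = sqrt (\<Sum>j. (cmod (a j))^2)"

definition taylor_coeff :: "(complex \<Rightarrow> complex) \<Rightarrow> nat \<Rightarrow> complex" where
  "taylor_coeff F j = (deriv ^^ j) F 0 / of_nat (fact j)"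

definition h2_fun :: "(nat \<Rightarrow> complex) \<Rightarrow> complex \<Rightarrow> complex" where
  "h2_fun a z = (\<Sum>j. a j * z ^ j)"

definition W :: "nat \<Rightarrow> (nat \<Rightarrow> complex) \<Rightarrow> (nat \<Rightarrow> complex)" where
  "W n a = taylor_coeff (\<lambda>z. (\<Sum>i<n. z ^ i) * h2_fun a (z ^ n))"

definition Wstar :: "nat \<Rightarrow> (nat \<Rightarrow> complex) \<Rightarrow> (nat \<Rightarrow> complex)" where
  "Wstar n b = (THE c. c \<in> H2 \<and> (\<forall>a\<in>H2. h2_inner (W n a) b = h2_inner a c))"

definition HC :: "((nat \<Rightarrow> complex) \<Rightarrow> (nat \<Rightarrow> complex)) \<Rightarrow> (nat \<Rightarrow> complex) set" where
  "HC T = {f \<in> H2. \<forall>g\<in>H2. \<forall>e>0. \<exists>m. h2_norm (\<lambda>j. (T ^^ m) f j - g j) < e}"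

definition logbr :: "nat \<Rightarrow> complex \<Rightarrow> complex" where
  "logbr k = (SOME g. g holomorphic_on ball 0 1 \<and>
      (\<forall>z\<in>ball 0 1. exp (g z) = (\<Sum>i<k. z ^ i) / of_nat k) \<and> g 0 \<in> \<real>)"

definition h :: "nat \<Rightarrow> (nat \<Rightarrow> complex)" where
  "h k = taylor_coeff (\<lambda>z. logbr k z / (1 - z))"

definition cspan_seq :: "(nat \<Rightarrow> complex) set \<Rightarrow> (nat \<Rightarrow> complex) set" where
  "cspan_seq G = {x. \<exists>S c. finite S \<and> S \<subseteq> G \<and> x = (\<lambda>j. \<Sum>g\<in>S. c g * g j)}"

definition Mspace :: "(nat \<Rightarrow> complex) set" where
  "Mspace = cspan_seq {(\<lambda>j. h k j - h l j) | k l. k \<ge> 2 \<and> l \<ge> 2}"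

definition Mperp :: "(nat \<Rightarrow> complex) set" where
  "Mperp = {f \<in> H2. \<forall>m\<in>Mspace. h2_inner f m = 0}"

end

theory Submission
  imports Defs
begin

lemma S_geo: "(z::complex) \<noteq> 1 \<Longrightarrow> (\<Sum>i<k. z ^ i) = (1 - z ^ k) / (1 - z)"
  by (simp add: geometric_sum) (simp add: field_simps)

lemma pow_ball: "z \<in> ball (0::complex) 1 \<Longrightarrow> n \<ge> 1 \<Longrightarrow> z ^ n \<in> ball 0 1"
  by (simp add: norm_power power_less_one_iff) 

lemma pow_ne1: "z \<in> ball (0::complex) 1 \<Longrightarrow> n \<ge> 1 \<Longrightarrow> z ^ n \<noteq> 1"
  using pow_ball[of z n] by auto

lemma S_nz: assumes "z \<in> ball (0::complex) 1" "k \<ge> 1" shows "(\<Sum>i<k. z ^ i) \<noteq> 0"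
proof -
  have "z \<noteq> 1" using assms by auto
  then show ?thesis using S_geo[of z k] pow_ne1[OF assms] by auto
qed

lemma S_0: "k \<ge> 1 \<Longrightarrow> (\<Sum>i<k. (0::complex) ^ i) = 1"
  by (induction k rule: dec_induct) auto

lemma logbr_spec:
  assumes "k \<ge> 1"
  shows "logbr k holomorphic_on ball 0 1 \<and> (\<forall>z\<in>ball 0 1. exp (logbr k z) = (\<Sum>i<k. z ^ i) / of_nat k) \<and> logbr k 0 \<in> \<real>"
proof -
  let ?f = "\<lambda>z::complex. (\<Sum>i<k. z ^ i) / of_nat k"
  have hol: "?f holomorphic_on ball 0 1" using assms by (intro holomorphic_intros) auto
  have nz: "\<And>z. z \<in> ball 0 1 \<Longrightarrow> ?f z \<noteq> 0" using S_nz assms by (auto simp: divide_eq_0_iff simp del: of_nat_eq_0_iff) (use assms in simp)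
  obtain g where g: "g holomorphic_on ball 0 1" "\<And>z. z \<in> ball 0 1 \<Longrightarrow> ?f z = exp (g z)"
    using contractible_imp_holomorphic_log[OF hol convex_imp_contractible[OF convex_ball] nz] by blast
  define g' where "g' = (\<lambda>z. g z - g 0 - of_real (ln (real k)))"
  have H1: "g' holomorphic_on ball 0 1" unfolding g'_def using g(1) by (intro holomorphic_intros)
  have H2: "\<forall>z\<in>ball 0 1. exp (g' z) = ?f z"
  proof
    fix z :: complex assume z: "z \<in> ball 0 1"
    have e0: "exp (g 0) = 1 / of_nat k" using g(2)[of 0] S_0[OF assms] by simp
    have "exp (g' z) = exp (g z) / exp (g 0) / exp (of_real (ln (real k)))"
      unfolding g'_def by (simp add: exp_diff)
    also have "exp (of_real (ln (real k))) = (of_nat k :: complex)"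
      proof -
      have "exp (of_real (ln (real k))) = (of_real (exp (ln (real k))) :: complex)" by (simp only: exp_of_real)
      also have "\<dots> = of_real (real k)" using assms by simp
      finally show ?thesis by simp
    qed
    finally show "exp (g' z) = ?f z" using e0 g(2)[OF z] assms by (simp add: field_simps)
  qed
  have H3: "g' 0 \<in> \<real>" unfolding g'_def by simp
  have "\<exists>g. g holomorphic_on ball 0 1 \<and> (\<forall>z\<in>ball 0 1. exp (g z) = ?f z) \<and> g 0 \<in> \<real>"
    by (rule exI[of _ g'], intro conjI H1 H2 H3)
  from someI_ex[OF this] show ?thesis unfolding logbr_def .
qed

lemma logbr_0: assumes "k \<ge> 1" shows "logbr k 0 = - of_real (ln (real k))"
proof -
  from logbr_spec[OF assms] obtain r where r: "logbr k 0 = of_real r" 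
    by (auto elim!: Reals_cases)
  have "exp (logbr k 0) = (\<Sum>i<k. (0::complex) ^ i) / of_nat k" using logbr_spec[OF assms] by simp
  then have e: "exp (logbr k 0) = 1 / of_nat k" unfolding S_0[OF assms] .
  have "of_real (exp r) = (of_real (1 / real k) :: complex)" using e r by (simp add: exp_of_real)
  then have "exp r = 1 / real k" using of_real_eq_iff by blast
  then have "r = ln (1 / real k)" using assms by (metis exp_gt_zero ln_exp)
  then show ?thesis using r assms by (simp add: ln_div)
qed

lemma log_unique:
  fixes g1 g2 :: "complex \<Rightarrow> complex"
  assumes c1: "continuous_on (ball 0 1) g1" and c2: "continuous_on (ball 0 1) g2"
    and e: "\<And>z. z \<in> ball 0 1 \<Longrightarrow> exp (g1 z) = exp (g2 z)" and z0: "g1 0 = g2 0"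
    and z: "z \<in> ball 0 1"
  shows "g1 z = g2 z"
proof -
  let ?d = "\<lambda>z. g1 z - g2 z"
  have disc: "\<exists>n::int. ?d x = of_int (2 * n) * pi * \<i>" if x: "x \<in> ball 0 1" for x
  proof -
    from e[OF x] obtain m :: int where "g1 x = g2 x + of_int (2 * m) * pi * \<i>"
      unfolding exp_eq by blast
    then have "?d x = of_int (2 * m) * pi * \<i>" by simp
    then show ?thesis by blast
  qed
  have "?d constant_on ball 0 1"
  proof (rule continuous_discrete_range_constant)
    show "connected (ball (0::complex) 1)" by simp
    show "continuous_on (ball 0 1) ?d" using c1 c2 by (intro continuous_intros)
    fix x assume x: "x \<in> ball (0::complex) 1"
    show "\<exists>e>0. \<forall>y. y \<in> ball 0 1 \<and> ?d y \<noteq> ?d x \<longrightarrow> e \<le> norm (?d y - ?d x)"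
    proof (intro exI[of _ "2 * pi"] conjI allI impI)
      fix y assume y: "y \<in> ball 0 1 \<and> ?d y \<noteq> ?d x"
      obtain m where m: "?d x = of_int (2 * m) * pi * \<i>" using disc x by blast
      obtain p where p: "?d y = of_int (2 * p) * pi * \<i>" using disc y by blast
      have "p \<noteq> m" using y m p by auto
      then have "1 \<le> \<bar>p - m\<bar>" by simp
      then have i1: "1 \<le> \<bar>real_of_int (p - m)\<bar>" by (metis of_int_1_le_iff of_int_abs)
      have "?d y - ?d x = of_real (2 * pi * real_of_int (p - m)) * \<i>" 
        unfolding m p by (simp add: algebra_simps)
      then have "norm (?d y - ?d x) = 2 * pi * \<bar>real_of_int (p - m)\<bar>"
        by (simp only: norm_mult norm_ii norm_of_real abs_mult) simp
      then show "2 * pi \<le> norm (?d y - ?d x)" using i1 by (simp add: mult_le_cancel_left1)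
    qed simp
  qed
  then have "?d z = ?d 0" using z by (auto simp: constant_on_def)
  then show ?thesis using z0 by simp
qed

lemma logbr_cont: "k \<ge> 1 \<Longrightarrow> continuous_on (ball 0 1) (logbr k)"
  using logbr_spec holomorphic_on_imp_continuous_on by blast

lemma logbr_exp: "k \<ge> 1 \<Longrightarrow> z \<in> ball 0 1 \<Longrightarrow> exp (logbr k z) = (\<Sum>i<k. z ^ i) / of_nat k"
  using logbr_spec by blast

lemma S_mult: assumes "z \<in> ball (0::complex) 1" "n \<ge> 1" 
  shows "(\<Sum>i<k*n. z ^ i) = (\<Sum>i<n. z ^ i) * (\<Sum>i<k. (z ^ n) ^ i)"
proof -
  have z1: "z \<noteq> 1" using assms by auto
  have zn: "z ^ n \<noteq> 1" using pow_ne1 assms by blast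
  have a: "1 - z \<noteq> 0" "1 - z ^ n \<noteq> 0" using z1 zn by auto
  have "z ^ (k * n) = (z ^ n) ^ k" by (simp add: power_mult[symmetric] mult.commute)
  moreover have "\<And>w. 1 - w \<noteq> 0 \<Longrightarrow> (1 - w ^ k) / (1 - z) = ((1 - w) / (1 - z)) * ((1 - w ^ k) / (1 - w))"
    by simp
  ultimately show ?thesis unfolding S_geo[OF z1] S_geo[OF zn] using a
    by simp
qed

lemma logbr_pow:
  assumes k: "k \<ge> 1" and n: "n \<ge> 1" and z: "z \<in> ball 0 1"
  shows "logbr k (z ^ n) = logbr (k * n) z - logbr n z"
proof (rule log_unique[of "\<lambda>z. logbr k (z ^ n)" "\<lambda>z. logbr (k * n) z - logbr n z", OF _ _ _ _ z])
  show "continuous_on (ball 0 1) (\<lambda>z. logbr k (z ^ n))"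
    using pow_ball[OF _ n] by (intro continuous_on_compose2[OF logbr_cont[OF k]] continuous_intros) auto
  show "continuous_on (ball 0 1) (\<lambda>z. logbr (k * n) z - logbr n z)"
    using k n by (intro continuous_intros logbr_cont) auto
  fix w :: complex assume w: "w \<in> ball 0 1"
  have kn: "k * n \<ge> 1" using k n by simp
  have Snz: "(\<Sum>i<n. w ^ i) \<noteq> 0" using S_nz[OF w n] .
  show "exp (logbr k (w ^ n)) = exp (logbr (k * n) w - logbr n w)"
    unfolding exp_diff logbr_exp[OF k pow_ball[OF w n]] logbr_exp[OF kn w] logbr_exp[OF n w] S_mult[OF w n]
    using Snz k n by (simp add: field_simps)
next
  show "logbr k (0 ^ n) = logbr (k * n) 0 - logbr n 0"
    using k n by (simp add: logbr_0 ln_mult zero_power)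
qed

lemma tc_cong:
  assumes "r > 0" "\<And>z. z \<in> ball 0 r \<Longrightarrow> F z = G z"
  shows "taylor_coeff F = taylor_coeff G"
proof
  fix j
  have "eventually (\<lambda>z. z \<in> ball 0 r) (nhds (0::complex))"
    using assms(1) by (intro eventually_nhds_in_open) auto
  then have "eventually (\<lambda>z. F z = G z) (nhds 0)" by eventually_elim (use assms in auto)
  then show "taylor_coeff F j = taylor_coeff G j"
    unfolding taylor_coeff_def by (simp add: higher_deriv_cong_ev)
qed

lemma tc_diff:
  assumes "F holomorphic_on ball 0 r" "G holomorphic_on ball 0 r" "r > 0"
  shows "taylor_coeff (\<lambda>z. F z - G z) j = taylor_coeff F j - taylor_coeff G j"
  unfolding taylor_coeff_def using assms
  by (subst higher_deriv_diff[of F "ball 0 r" G]) (auto simp: diff_divide_distrib)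

lemma h2fun_tc:
  assumes "F holomorphic_on ball 0 1" "w \<in> ball 0 1"
  shows "h2_fun (taylor_coeff F) w = F w"
proof -
  have "(\<lambda>j. taylor_coeff F j * w ^ j) sums F w"
    using holomorphic_power_series[OF assms] by (simp add: taylor_coeff_def)
  then show ?thesis unfolding h2_fun_def by (simp add: sums_iff)
qed

lemma tc_powser:
  assumes r: "r > 0" and s: "\<And>z. z \<in> ball 0 r \<Longrightarrow> (\<lambda>j. c j * z ^ j) sums F z"
  shows "taylor_coeff F = c"
proof -
  have rad: "fps_conv_radius (Abs_fps c) \<ge> ereal r"
    unfolding fps_conv_radius_def
  proof (rule conv_radius_geI_ex)
    fix t :: real assume t: "0 < t" "ereal t < ereal r"
    show "\<exists>z. norm z = t \<and> summable (\<lambda>n. fps_nth (Abs_fps c) n * z ^ n)"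
      using s[of "of_real t"] t by (intro exI[of _ "of_real t"]) (auto simp: sums_iff)
  qed
  have "eventually (\<lambda>z. z \<in> ball 0 r) (nhds (0::complex))"
    using r by (intro eventually_nhds_in_open) auto
  then have ev: "eventually (\<lambda>z. eval_fps (Abs_fps c) z = F z) (nhds 0)"
    by eventually_elim (use s in \<open>auto simp: eval_fps_def sums_iff\<close>)
  have "F has_fps_expansion Abs_fps c"
    unfolding has_fps_expansion_def using rad r ev by (auto intro: less_le_trans[of 0 "ereal r"])
  then have "\<And>j. c j = taylor_coeff F j"
    using fps_nth_fps_expansion[of F "Abs_fps c"] by (simp add: taylor_coeff_def)
  then show ?thesis by auto
qed

lemma H2_bounded: assumes "a \<in> H2" shows "\<exists>M. \<forall>j. cmod (a j) \<le> M"
proof -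
  have s: "summable (\<lambda>j. (cmod (a j))^2)" using assms by (simp add: H2_def)
  have "\<forall>j. cmod (a j) \<le> sqrt (\<Sum>j. (cmod (a j))^2)"
  proof
    fix j
    have "sum (\<lambda>j. (cmod (a j))^2) {j} \<le> (\<Sum>j. (cmod (a j))^2)"
      by (rule sum_le_suminf[OF s]) auto
    then show "cmod (a j) \<le> sqrt (\<Sum>j. (cmod (a j))^2)" by (simp add: real_le_rsqrt)
  qed
  then show ?thesis by blast
qed

lemma prod_le_sq: "(x::real) * y \<le> (x^2 + y^2) / 2"
proof -
  have "0 \<le> (x - y)^2" by simp
  then show ?thesis by (simp add: power2_eq_square algebra_simps)
qed

lemma prod_le_sq2: "(x::real) * y * 2 \<le> x^2 + y^2"
  using prod_le_sq[of x y] by simp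

lemma H2_prod_summable:
  assumes "a \<in> H2" "b \<in> H2"
  shows "summable (\<lambda>j. cmod (a j * cnj (b j)))" "summable (\<lambda>j. a j * cnj (b j))"
proof -
  have sa: "summable (\<lambda>j. (cmod (a j))^2)" and sb: "summable (\<lambda>j. (cmod (b j))^2)"
    using assms by (auto simp: H2_def)
  have "summable (\<lambda>j. ((cmod (a j))^2 + (cmod (b j))^2) / 2)"
    using summable_add[OF sa sb] by (intro summable_divide)
  then show s: "summable (\<lambda>j. cmod (a j * cnj (b j)))"
    by (rule summable_comparison_test'[where N = 0]) (auto simp: norm_mult prod_le_sq2)
  then show "summable (\<lambda>j. a j * cnj (b j))" by (rule summable_norm_cancel)
qed

lemma h2_inner_cnj:
  assumes "a \<in> H2" "b \<in> H2"
  shows "cnj (h2_inner a b) = h2_inner b a"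
proof -
  have "(\<lambda>j. a j * cnj (b j)) sums h2_inner a b"
    unfolding h2_inner_def using H2_prod_summable(2)[OF assms] by (simp add: summable_sums)
  then have "(\<lambda>j. cnj (a j * cnj (b j))) sums cnj (h2_inner a b)" by (simp only: sums_cnj)
  then have "(\<lambda>j. b j * cnj (a j)) sums cnj (h2_inner a b)" by (simp add: mult.commute)
  then show ?thesis unfolding h2_inner_def by (simp add: sums_iff)
qed

lemma block_div: assumes "(n::nat) > 0" "j \<in> {q * n..<q * n + n}" shows "j div n = q"
proof -
  define r where "r = j - q * n"
  have j: "j = q * n + r" "r < n" using assms unfolding r_def by auto
  then show ?thesis using assms(1) by simp
qed

lemma sum_block_pow: "(\<Sum>j\<in>{m..<m + n}. (z::complex) ^ j) = z ^ m * (\<Sum>r<n. z ^ r)"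
proof (induction n)
  case (Suc n)
  have e: "{m..<m + Suc n} = insert (m + n) {m..<m + n}" by auto
  have "(\<Sum>j\<in>{m..<m + Suc n}. z ^ j) = z ^ (m + n) + (\<Sum>j\<in>{m..<m + n}. z ^ j)"
    unfolding e by (subst sum.insert) auto
  also have "\<dots> = z ^ m * z ^ n + z ^ m * (\<Sum>r<n. z ^ r)" unfolding Suc power_add ..
  also have "\<dots> = z ^ m * (\<Sum>r<Suc n. z ^ r)" by (simp add: distrib_left add.commute)
  finally show ?case .
qed simp

lemma W_coeff:
  assumes n: "n \<ge> 1" and a: "a \<in> H2"
  shows "W n a = (\<lambda>j. a (j div n))"
  unfolding W_def
proof (rule tc_powser[of 1])
  fix z :: complex assume z: "z \<in> ball 0 1"
  obtain M where M: "\<And>j. cmod (a j) \<le> M" using H2_bounded[OF a] by blast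
  have nz: "norm z < 1" using z by simp
  have nzn: "norm (z ^ n) < 1" using pow_ball[OF z n] by simp
  have "summable (\<lambda>j. M * norm z ^ j)" using nz by (intro summable_mult summable_geometric) simp
  then have s1: "summable (\<lambda>j. a (j div n) * z ^ j)"
    by (rule summable_comparison_test'[where N = 0])
       (auto simp: norm_mult norm_power intro!: mult_right_mono M)
  have "summable (\<lambda>j. M * norm (z ^ n) ^ j)" using nzn by (intro summable_mult summable_geometric) simp
  then have s2: "summable (\<lambda>q. a q * (z ^ n) ^ q)"
    by (rule summable_comparison_test'[where N = 0])
       (auto simp: norm_mult norm_power intro!: mult_right_mono M)
  have g: "(\<lambda>q. sum (\<lambda>j. a (j div n) * z ^ j) {q * n..<q * n + n}) sums (\<Sum>j. a (j div n) * z ^ j)"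
    using sums_group[OF summable_sums[OF s1], of n] n by simp
  have blk: "sum (\<lambda>j. a (j div n) * z ^ j) {q * n..<q * n + n} = (\<Sum>r<n. z ^ r) * (a q * (z ^ n) ^ q)" for q
  proof -
    have "sum (\<lambda>j. a (j div n) * z ^ j) {q * n..<q * n + n} = sum (\<lambda>j. a q * z ^ j) {q * n..<q * n + n}"
      using block_div[of n _ q] n by (intro sum.cong) auto
    also have "\<dots> = a q * (z ^ (q * n) * (\<Sum>r<n. z ^ r))" by (simp add: sum_distrib_left[symmetric] sum_block_pow)
    finally show ?thesis by (simp add: power_mult mult.commute mult.left_commute)
  qed
  have "(\<lambda>q. (\<Sum>r<n. z ^ r) * (a q * (z ^ n) ^ q)) sums ((\<Sum>r<n. z ^ r) * h2_fun a (z ^ n))"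
    unfolding h2_fun_def by (intro sums_mult summable_sums s2)
  moreover have "(\<lambda>q. (\<Sum>r<n. z ^ r) * (a q * (z ^ n) ^ q)) sums (\<Sum>j. a (j div n) * z ^ j)"
    using g blk by simp
  ultimately have "(\<Sum>j. a (j div n) * z ^ j) = (\<Sum>r<n. z ^ r) * h2_fun a (z ^ n)"
    using sums_unique2 by blast
  then show "(\<lambda>j. a (j div n) * z ^ j) sums ((\<Sum>i<n. z ^ i) * h2_fun a (z ^ n))"
    using summable_sums[OF s1] by simp
qed simp

lemma W_H2:
  assumes n: "n \<ge> 1" and a: "a \<in> H2"
  shows "W n a \<in> H2"
proof -
  let ?f = "\<lambda>q. (cmod (a q))^2"
  have s: "summable ?f" using a by (simp add: H2_def)
  have blk: "sum (\<lambda>j. ?f (j div n)) {m * n..<m * n + n} = of_nat n * ?f m" for m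
  proof -
    have "sum (\<lambda>j. ?f (j div n)) {m * n..<m * n + n} = sum (\<lambda>j. ?f m) {m * n..<m * n + n}"
      using block_div[of n _ m] n by (intro sum.cong) auto
    then show ?thesis by simp
  qed
  have "summable (\<lambda>j. ?f (j div n))"
  proof (rule bounded_imp_summable)
    fix N
    have sub: "{..N} \<subseteq> {..<Suc N * n}"
    proof
      fix x assume "x \<in> {..N}"
      moreover have "Suc N * 1 \<le> Suc N * n" using n by (intro mult_le_mono2)
      then have "Suc N \<le> Suc N * n" by simp
      ultimately show "x \<in> {..<Suc N * n}" by simp
    qed
    have "(\<Sum>k\<le>N. ?f (k div n)) \<le> (\<Sum>k<Suc N * n. ?f (k div n))"
      using sub by (intro sum_mono2) auto
    also have "\<dots> = (\<Sum>m<Suc N. sum (\<lambda>j. ?f (j div n)) {m * n..<m * n + n})"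
      by (rule sum.nat_group[symmetric])
    also have "\<dots> = of_nat n * (\<Sum>m<Suc N. ?f m)" unfolding blk by (rule sum_distrib_left[symmetric])
    also have "\<dots> \<le> of_nat n * (\<Sum>m. ?f m)"
      by (intro mult_left_mono sum_le_suminf s) auto
    finally show "(\<Sum>k\<le>N. ?f (k div n)) \<le> of_nat n * (\<Sum>m. ?f m)" .
  qed simp
  then show ?thesis using W_coeff[OF n a] by (simp add: H2_def)
qed

definition cadj :: "nat \<Rightarrow> (nat \<Rightarrow> complex) \<Rightarrow> nat \<Rightarrow> complex" where
  "cadj n b = (\<lambda>q. sum b {q * n..<q * n + n})"

lemma sq_sum_le:
  fixes b :: "nat \<Rightarrow> complex"
  assumes "finite A"
  shows "(cmod (sum b A))^2 \<le> real (card A) * sum (\<lambda>j. (cmod (b j))^2) A"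
proof -
  have "(cmod (sum b A))^2 \<le> (sum (\<lambda>j. cmod (b j)) A)^2"
    by (intro power_mono norm_sum) simp
  also have "\<dots> = (sum (\<lambda>j. 1 * cmod (b j)) A)^2" by simp
  also have "\<dots> \<le> (sum (\<lambda>j. 1\<^sup>2) A) * sum (\<lambda>j. (cmod (b j))^2) A"
    by (rule Cauchy_Schwarz_ineq_sum)
  also have "\<dots> = real (card A) * sum (\<lambda>j. (cmod (b j))^2) A" by simp
  finally show ?thesis .
qed

lemma cadj_H2:
  assumes n: "n \<ge> 1" and b: "b \<in> H2"
  shows "cadj n b \<in> H2"
proof -
  let ?g = "\<lambda>j. (cmod (b j))^2"
  have s: "summable ?g" using b by (simp add: H2_def)
  have npos: "0 < n" using n by simp
  have "summable (\<lambda>q. sum ?g {q * n..<q * n + n})"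
    using sums_group[OF summable_sums[OF s] npos] by (rule sums_summable)
  then have sm: "summable (\<lambda>q. real n * sum ?g {q * n..<q * n + n})" by (rule summable_mult)
  have bd:  "(cmod (cadj n b q))^2 \<le> real n * sum ?g {q * n..<q * n + n}" for q
    using sq_sum_le[where A="{q * n..<q * n + n}" and b=b] by (simp add: cadj_def)
  have "summable (\<lambda>q. (cmod (cadj n b q))^2)"
  proof (rule summable_comparison_test'[OF sm])
    fix q show "norm ((cmod (cadj n b q))^2) \<le> real n * sum ?g {q * n..<q * n + n}"
      using bd[of q] by simp
  qed
  then show ?thesis by (simp add: H2_def)
qed

lemma adj_ident:
  assumes n: "n \<ge> 1" and a: "a \<in> H2" and b: "b \<in> H2"
  shows "h2_inner (W n a) b = h2_inner a (cadj n b)"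
proof -
  let ?f = "\<lambda>j. a (j div n) * cnj (b j)"
  have WH: "(\<lambda>j. a (j div n)) \<in> H2" using W_H2[OF n a] W_coeff[OF n a] by simp
  have s: "summable ?f" using H2_prod_summable(2)[OF WH b] by simp
  have g: "(\<lambda>q. sum ?f {q * n..<q * n + n}) sums (\<Sum>j. ?f j)"
    using sums_group[OF summable_sums[OF s], of n] n by simp
  have blk: "sum ?f {q * n..<q * n + n} = a q * cnj (cadj n b q)" for q
  proof -
    have "sum ?f {q * n..<q * n + n} = sum (\<lambda>j. a q * cnj (b j)) {q * n..<q * n + n}"
      using block_div[of n _ q] n by (intro sum.cong) auto
    also have "\<dots> = a q * cnj (cadj n b q)"
      by (simp add: cadj_def sum_distrib_left)
    finally show ?thesis .
  qed
  have "(\<lambda>q. a q * cnj (cadj n b q)) sums (\<Sum>j. ?f j)" using g unfolding blk .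
  then have "h2_inner a (cadj n b) = (\<Sum>j. ?f j)" unfolding h2_inner_def by (simp add: sums_iff)
  then show ?thesis unfolding h2_inner_def W_coeff[OF n a] by simp
qed

lemma delta_H2: "(\<lambda>j. if j = q then 1 else 0 :: complex) \<in> H2"
proof -
  have "(\<lambda>j. if j = q then (1::real) else 0) sums 1" using sums_single[of q "\<lambda>_. 1::real"] by simp
  then have "summable (\<lambda>j. if j = q then (1::real) else 0)" by (simp add: sums_iff)
  moreover have "(\<lambda>j. (cmod (if j = q then 1 else 0 :: complex))^2) = (\<lambda>j. if j = q then (1::real) else 0)"
    by auto
  ultimately show ?thesis by (simp add: H2_def)
qed

lemma delta_inner: fixes c :: "nat \<Rightarrow> complex" and q :: nat shows "h2_inner (\<lambda>j. if j = q then 1 else 0) c = cnj (c q)"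
proof -
  have "(\<lambda>j. (if j = q then 1 else 0) * cnj (c j)) = (\<lambda>j. if j = q then cnj (c j) else 0)" by auto
  moreover have "(\<lambda>j. if j = q then cnj (c j) else 0) sums cnj (c q)" by (rule sums_single)
  ultimately show ?thesis unfolding h2_inner_def by (simp add: sums_iff)
qed

lemma Wstar_eq:
  assumes n: "n \<ge> 1" and b: "b \<in> H2"
  shows "Wstar n b = cadj n b"
  unfolding Wstar_def
proof (rule the_equality)
  show "cadj n b \<in> H2 \<and> (\<forall>a\<in>H2. h2_inner (W n a) b = h2_inner a (cadj n b))"
    using cadj_H2[OF n b] adj_ident[OF n _ b] by blast
next
  fix c assume c: "c \<in> H2 \<and> (\<forall>a\<in>H2. h2_inner (W n a) b = h2_inner a c)"
  show "c = cadj n b"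
  proof
    fix q :: nat
    let ?d = "\<lambda>j. if j = q then 1 else 0 :: complex"
    have "cnj (c q) = h2_inner ?d c" by (simp add: delta_inner)
    also have "\<dots> = h2_inner (W n ?d) b" using c delta_H2 by auto
    also have "\<dots> = h2_inner ?d (cadj n b)" using adj_ident[OF n delta_H2 b] .
    also have "\<dots> = cnj (cadj n b q)" by (simp add: delta_inner)
    finally show "c q = cadj n b q" by simp
  qed
qed

lemma Wstar_H2: "n \<ge> 1 \<Longrightarrow> b \<in> H2 \<Longrightarrow> Wstar n b \<in> H2"
  using Wstar_eq cadj_H2 by simp

lemma Wstar_adj: "n \<ge> 1 \<Longrightarrow> a \<in> H2 \<Longrightarrow> b \<in> H2 \<Longrightarrow> h2_inner (W n a) b = h2_inner a (Wstar n b)"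
  using Wstar_eq adj_ident by simp

lemma orbit:
  assumes n: "n \<ge> 1" and f: "f \<in> H2"
  shows "(Wstar n ^^ m) f \<in> H2 \<and> (\<forall>v\<in>H2. h2_inner ((Wstar n ^^ m) f) v = h2_inner f ((W n ^^ m) v))"
proof (induction m)
  case 0
  then show ?case using f by simp
next
  case (Suc m)
  let ?y = "(Wstar n ^^ m) f"
  have y: "?y \<in> H2" using Suc by blast
  have "Wstar n ?y \<in> H2" using Wstar_H2[OF n y] .
  moreover have "h2_inner (Wstar n ?y) v = h2_inner f ((W n ^^ Suc m) v)" if v: "v \<in> H2" for v
  proof -
    have Wv: "W n v \<in> H2" using W_H2[OF n v] .
    have "h2_inner (Wstar n ?y) v = cnj (h2_inner v (Wstar n ?y))"
      using h2_inner_cnj[OF v Wstar_H2[OF n y]] by simp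
    also have "\<dots> = cnj (h2_inner (W n v) ?y)" using Wstar_adj[OF n v y] by simp
    also have "\<dots> = h2_inner ?y (W n v)" using h2_inner_cnj[OF Wv y] .
    also have "\<dots> = h2_inner f ((W n ^^ m) (W n v))" using Suc Wv by blast
    also have "(W n ^^ m) (W n v) = (W n ^^ Suc m) v" by (simp only: funpow_Suc_right comp_def)
    finally show ?thesis .
  qed
  ultimately show ?case by simp
qed

definition G :: "nat \<Rightarrow> nat \<Rightarrow> complex \<Rightarrow> complex" where
  "G k l = (\<lambda>z. (logbr k z - logbr l z) / (1 - z))"

lemma hol_div1: "k \<ge> 1 \<Longrightarrow> (\<lambda>z. logbr k z / (1 - z)) holomorphic_on ball 0 1"
  using logbr_spec[of k] by (intro holomorphic_intros) auto

lemma G_hol: "k \<ge> 1 \<Longrightarrow> l \<ge> 1 \<Longrightarrow> G k l holomorphic_on ball 0 1"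
  unfolding G_def using logbr_spec[of k] logbr_spec[of l] by (intro holomorphic_intros) auto

lemma h_diff: assumes "k \<ge> 1" "l \<ge> 1"
  shows "(\<lambda>j. h k j - h l j) = taylor_coeff (G k l)"
proof
  fix j
  have "taylor_coeff (\<lambda>z. logbr k z / (1 - z) - logbr l z / (1 - z)) j = h k j - h l j"
    unfolding h_def by (rule tc_diff[OF hol_div1[OF assms(1)] hol_div1[OF assms(2)]]) simp
  moreover have "(\<lambda>z. logbr k z / (1 - z) - logbr l z / (1 - z)) = G k l"
    unfolding G_def by (simp add: diff_divide_distrib)
  ultimately show "h k j - h l j = taylor_coeff (G k l) j" by simp
qed

lemma W_h: assumes n: "n \<ge> 1" and k: "k \<ge> 1" and l: "l \<ge> 1"
  shows "W n (\<lambda>j. h k j - h l j) = (\<lambda>j. h (k * n) j - h (l * n) j)"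
proof -
  have kn: "k * n \<ge> 1" and ln: "l * n \<ge> 1" using n k l by auto
  have "W n (taylor_coeff (G k l)) = taylor_coeff (\<lambda>z. (\<Sum>i<n. z ^ i) * h2_fun (taylor_coeff (G k l)) (z ^ n))"
    unfolding W_def ..
  also have "\<dots> = taylor_coeff (G (k * n) (l * n))"
  proof (rule tc_cong[of 1])
    fix z :: complex assume z: "z \<in> ball 0 1"
    have z1: "z \<noteq> 1" using z by auto
    have zn: "1 - z ^ n \<noteq> 0" using pow_ne1[OF z n] by auto
    have "h2_fun (taylor_coeff (G k l)) (z ^ n) = G k l (z ^ n)"
      by (rule h2fun_tc[OF G_hol[OF k l] pow_ball[OF z n]])
    also have "\<dots> = (logbr (k * n) z - logbr (l * n) z) / (1 - z ^ n)"
      unfolding G_def using logbr_pow[OF k n z] logbr_pow[OF l n z] by simp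
    finally have e: "h2_fun (taylor_coeff (G k l)) (z ^ n) = (logbr (k * n) z - logbr (l * n) z) / (1 - z ^ n)" .
    show "(\<Sum>i<n. z ^ i) * h2_fun (taylor_coeff (G k l)) (z ^ n) = G (k * n) (l * n) z"
    proof -
      have gen: "\<And>A w. 1 - w \<noteq> 0 \<Longrightarrow> (1 - w) / (1 - z) * (A / (1 - w)) = A / (1 - z)" by simp
      show ?thesis unfolding e unfolding S_geo[OF z1] G_def by (rule gen[OF zn])
    qed
  qed simp
  finally show ?thesis using h_diff[OF k l] h_diff[OF kn ln] by simp
qed

lemma W_pow: assumes n: "n \<ge> 1"
  shows "(W n ^^ m) (\<lambda>j. h 4 j - h 2 j) = (\<lambda>j. h (4 * n ^ m) j - h (2 * n ^ m) j)"
proof (induction m)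
  case 0 then show ?case by simp
next
  case (Suc m)
  have p: "n ^ m \<ge> 1" using n by simp
  have "(W n ^^ Suc m) (\<lambda>j. h 4 j - h 2 j) = W n (\<lambda>j. h (4 * n ^ m) j - h (2 * n ^ m) j)"
    using Suc by simp
  also have "\<dots> = (\<lambda>j. h (4 * n ^ m * n) j - h (2 * n ^ m * n) j)"
    using p by (intro W_h n) auto
  finally show ?case by (simp add: ac_simps)
qed

lemma u0: "h 4 0 - h 2 0 \<noteq> 0"
proof -
  have "h 4 0 - h 2 0 = taylor_coeff (G 4 2) 0" using h_diff[of 4 2] by (metis one_le_numeral)
  also have "\<dots> = G 4 2 0" by (simp add: taylor_coeff_def)
  also have "\<dots> = - of_real (ln 4) + of_real (ln 2)" by (simp add: G_def logbr_0)
  also have "\<dots> = - of_real (ln 2)"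
  proof -
    have "ln (4::real) = ln 2 + ln 2" using ln_mult[of 2 2] by simp
    then show ?thesis by simp
  qed
  finally show ?thesis by simp
qed

definition P :: "nat \<Rightarrow> real" where
  "P M = - ln 2 + (\<Sum>k<M. (-1)^k / real (Suc k))"

definition cc :: "nat \<Rightarrow> complex" where
  "cc j = of_real (P (j div 2))"

lemma P_bound: "\<bar>P M\<bar> \<le> 1 / real (Suc M)"
proof -
  define f where "f = (\<lambda>k. (-1)^k / real (Suc k) :: real)"
  have fs: "f sums ln 2" unfolding f_def by (rule alternating_harmonic_series_sums)
  have sf: "summable f" using fs by (simp add: sums_iff)
  have "ln 2 = (\<Sum>n. f (n + M)) + (\<Sum>i<M. f i)"
    using suminf_split_initial_segment[OF sf, of M] fs by (simp add: sums_iff)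
  then have PM: "P M = - (\<Sum>n. f (n + M))" unfolding P_def f_def by simp
  define a where "a = (\<lambda>i. 1 / real (Suc (i + M)))"
  have a0: "a \<longlonglongrightarrow> 0"
  proof -
    have "(\<lambda>n. inverse (real (Suc n))) \<longlonglongrightarrow> 0" by (rule LIMSEQ_inverse_real_of_nat)
    then have "(\<lambda>n. inverse (real (Suc (n + M)))) \<longlonglongrightarrow> 0" by (rule LIMSEQ_ignore_initial_segment)
    then show ?thesis unfolding a_def by (simp add: divide_inverse)
  qed
  have apos: "\<And>i. 0 \<le> a i" unfolding a_def by simp
  have amono: "\<And>i. a (Suc i) \<le> a i" unfolding a_def by (simp add: frac_le)
  note L = summable_Leibniz'[OF a0 apos amono]
  have up: "(\<Sum>i. (-1)^i * a i) \<le> a 0" using L(4)[of 0] by simp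
  have lo: "0 \<le> (\<Sum>i. (-1)^i * a i)" using L(2)[of 0] by simp
  have "(\<lambda>n. f (n + M)) = (\<lambda>n. (-1)^M * ((-1)^n * a n))"
    unfolding f_def a_def by (auto simp: power_add)
  then have "(\<Sum>n. f (n + M)) = (-1)^M * (\<Sum>i. (-1)^i * a i)"
    using suminf_mult[OF L(1), of "(-1)^M"] by simp
  then have "\<bar>P M\<bar> = \<bar>\<Sum>i. (-1)^i * a i\<bar>" unfolding PM by (simp add: abs_mult)
  also have "\<dots> \<le> a 0" using up lo by simp
  finally show ?thesis by (simp add: a_def)
qed

lemma cc_bound: "cmod (cc j) \<le> 1 / real (Suc (j div 2))"
  using P_bound[of "j div 2"] by (simp add: cc_def)

lemma cc_bound1: "cmod (cc j) \<le> 1"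
proof -
  have "1 / real (Suc (j div 2)) \<le> 1" by simp
  then show ?thesis using cc_bound[of j] by linarith
qed

lemma cc_H2: "cc \<in> H2"
proof -
  have s0: "summable (\<lambda>n. inverse (real n ^ 2))" by (rule inverse_power_summable) simp
  have "summable (\<lambda>n. inverse (real (n + 1) ^ 2))"
    using summable_ignore_initial_segment[OF s0, of 1] by simp
  then have sm: "summable (\<lambda>n. 4 * inverse (real (n + 1) ^ 2))" by (rule summable_mult)
  have bd: "(cmod (cc j))^2 \<le> 4 * inverse (real (j + 1) ^ 2)" for j
  proof -
    have "j + 1 \<le> 2 * Suc (j div 2)" by presburger
    then have p: "real (j + 1) \<le> 2 * real (Suc (j div 2))" by (metis of_nat_le_iff of_nat_mult of_nat_numeral)
    have "cmod (cc j) \<le> 1 / real (Suc (j div 2))" by (rule cc_bound)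
    also have "\<dots> \<le> 2 / real (j + 1)" using p by (simp add: field_simps)
    finally have "(cmod (cc j))^2 \<le> (2 / real (j + 1))^2" by (intro power_mono) simp_all
    then show ?thesis by (simp add: power_divide divide_inverse power_inverse)
  qed
  have "summable (\<lambda>j. (cmod (cc j))^2)"
  proof (rule summable_comparison_test'[OF sm])
    fix j show "norm ((cmod (cc j))^2) \<le> 4 * inverse (real (j + 1) ^ 2)" using bd[of j] by simp
  qed
  then show ?thesis by (simp add: H2_def)
qed

lemma bb_term:
  fixes z :: complex
  shows "(cc j - (if j = 0 then 0 else cc (j - 1))) * z ^ j =
         (if even j then - ((- (z^2)) ^ (j div 2)) / of_nat (j div 2) else 0) + (if j = 0 then - of_real (ln 2) else 0)"
proof (cases "j = 0")
  case True then show ?thesis by (simp add: cc_def P_def)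
next
  case False
  show ?thesis
  proof (cases "even j")
    case True
    define m where "m = j div 2 - 1"
    have m: "j = 2 * m + 2" using True False unfolding m_def by presburger
    have d1: "j div 2 = Suc m" "(j - 1) div 2 = m" using m by auto
    have "cc j - cc (j - 1) = of_real ((-1)^m / real (Suc m))"
      unfolding cc_def d1 P_def by simp
    also have "\<dots> = (-1)^m / of_nat (Suc m)" by simp
    finally have L: "(cc j - (if j = 0 then 0 else cc (j - 1))) * z ^ j = (-1)^m * z ^ j / of_nat (Suc m)"
      using False by simp
    have pm: "(- (z^2)) ^ m = (-1)^m * (z^2)^m" by (rule power_minus)
    have a: "(- (z^2)) ^ Suc m = - (z^2) * ((-1)^m * (z^2)^m)" by (simp only: power_Suc pm)
    have b: "z ^ j = z^2 * (z^2)^m" unfolding m power_add power_mult by (rule mult.commute)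
    have "(- (z^2)) ^ Suc m = - ((-1)^m * z ^ j)" unfolding a b by (simp only: mult_minus_left mult_minus_right mult.left_commute)
    then have R: "- ((- (z^2)) ^ (j div 2)) / of_nat (j div 2) = (-1)^m * z ^ j / of_nat (Suc m)"
      unfolding d1 by simp
    show ?thesis unfolding L using R True False by simp
  next
    case odd: False
    define m where "m = j div 2"
    have m: "j = 2 * m + 1" using odd unfolding m_def by presburger
    have "j div 2 = m" "(j - 1) div 2 = m" using m by auto
    then show ?thesis using False odd by (simp add: cc_def)
  qed
qed

lemma cc_series:
  assumes z: "z \<in> ball (0::complex) 1"
  shows "(\<lambda>j. cc j * z ^ j) sums ((ln (1 + z^2) - of_real (ln 2)) / (1 - z))"
proof -
  have nz: "norm z < 1" using z by simp
  have "summable (\<lambda>j. 1 * norm z ^ j)" using nz by (simp add: summable_geometric)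
  then have s1: "summable (\<lambda>j. cc j * z ^ j)"
    by (rule summable_comparison_test'[where N = 0])
       (simp add: norm_mult norm_power mult_left_le_one_le cc_bound1)
  define s where "s = (\<Sum>j. cc j * z ^ j)"
  have ss: "(\<lambda>j. cc j * z ^ j) sums s" using s1 unfolding s_def by (rule summable_sums)
  define d where "d = (\<lambda>j. (if j = 0 then 0 else cc (j - 1)) * z ^ j)"
  have "(\<lambda>j. z * (cc j * z ^ j)) sums (z * s)" using ss by (rule sums_mult)
  moreover have "(\<lambda>j. d (Suc j)) = (\<lambda>j. z * (cc j * z ^ j))" unfolding d_def by (auto simp: algebra_simps)
  ultimately have "(\<lambda>j. d (Suc j)) sums (z * s)" by simp
  then have ds: "d sums (z * s)" using sums_Suc_iff[of d "z * s"] by (simp add: d_def)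
  have bs: "(\<lambda>j. (cc j - (if j = 0 then 0 else cc (j - 1))) * z ^ j) sums (s - z * s)"
    using sums_diff[OF ss ds] unfolding d_def by (simp add: algebra_simps)
  define l where "l = (\<lambda>m. - ((- (z^2)) ^ m) / of_nat m)"
  have z2: "cmod (z^2) < 1" using nz by (simp add: norm_power power_less_one_iff)
  have ls: "l sums ln (1 + z^2)" unfolding l_def using Ln_series'[OF z2] by simp
  define e where "e = (\<lambda>j. if even j then l (j div 2) else 0)"
  have sm: "strict_mono (\<lambda>m::nat. 2 * m)" by (auto simp: strict_mono_def)
  have "(\<lambda>m. e (2 * m)) = l" unfolding e_def by auto
  moreover have "\<And>j. j \<notin> range (\<lambda>m::nat. 2 * m) \<Longrightarrow> e j = 0"
    unfolding e_def by (auto elim!: evenE)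
  ultimately have es: "e sums ln (1 + z^2)"
    using sums_mono_reindex[OF sm, of e] ls by simp
  have es2: "(\<lambda>j. e j + (if j = 0 then - of_real (ln 2) else 0)) sums (ln (1 + z^2) + - of_real (ln 2))"
    by (intro sums_add es sums_single)
  have "(\<lambda>j. (cc j - (if j = 0 then 0 else cc (j - 1))) * z ^ j) = (\<lambda>j. e j + (if j = 0 then - of_real (ln 2) else 0))"
    unfolding e_def l_def by (rule ext, rule bb_term)
  then have "s - z * s = ln (1 + z^2) - of_real (ln 2)"
    using bs es2 sums_unique2 by fastforce
  moreover have "1 - z \<noteq> 0" using z by auto
  ultimately have "s = (ln (1 + z^2) - of_real (ln 2)) / (1 - z)"
    by (simp add: field_simps)
  then show ?thesis using ss by simp
qed

lemma S4: "(\<Sum>i<4. (w::complex) ^ i) = (1 + w) * (1 + w^2)"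
  by (simp add: eval_nat_numeral algebra_simps)

lemma S2: "(\<Sum>i<2. (w::complex) ^ i) = 1 + w"
  by (simp add: eval_nat_numeral)

lemma not_nonpos: assumes "w \<in> ball (0::complex) 1" shows "1 + w^2 \<notin> \<real>\<^sub>\<le>\<^sub>0"
proof -
  have "\<bar>Re (w^2)\<bar> \<le> cmod (w^2)" by (rule abs_Re_le_cmod)
  moreover have "cmod (w^2) < 1" using assms by (simp add: norm_power power_less_one_iff)
  ultimately have "Re (1 + w^2) > 0" by simp
  then show ?thesis by (simp add: complex_nonpos_Reals_iff)
qed

lemma L42:
  assumes z: "z \<in> ball (0::complex) 1"
  shows "logbr 4 z - logbr 2 z = ln (1 + z^2) - of_real (ln 2)"
proof (rule log_unique[of "\<lambda>z. logbr 4 z - logbr 2 z" "\<lambda>z. ln (1 + z^2) - of_real (ln 2)", OF _ _ _ _ z])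
  show "continuous_on (ball 0 1) (\<lambda>z. logbr 4 z - logbr 2 z)"
    by (intro continuous_intros logbr_cont) auto
  have "continuous_on (ball 0 1) (\<lambda>z::complex. ln (1 + z^2))"
    by (rule continuous_on_Ln') (auto intro!: continuous_intros not_nonpos)
  then show "continuous_on (ball 0 1) (\<lambda>z::complex. ln (1 + z^2) - of_real (ln 2))"
    by (intro continuous_on_diff continuous_on_const)
  fix w :: complex assume w: "w \<in> ball 0 1"
  have w1: "1 + w \<noteq> 0" using S_nz[OF w, of 2] unfolding S2 by simp
  have w2: "1 + w^2 \<noteq> 0" using not_nonpos[OF w] by auto
  have e2: "exp (of_real (ln 2)) = (2::complex)"
  proof -
    have "exp (of_real (ln 2)) = (of_real (exp (ln 2)) :: complex)" by (simp only: exp_of_real)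
    then show ?thesis by simp
  qed
  have "exp (logbr 4 w - logbr 2 w) = ((1 + w) * (1 + w^2) / 4) / ((1 + w) / 2)"
  proof -
    have e4: "exp (logbr 4 w) = (1 + w) * (1 + w^2) / 4" using logbr_exp[of 4 w] w unfolding S4 by simp
    have e2': "exp (logbr 2 w) = (1 + w) / 2" using logbr_exp[of 2 w] w unfolding S2 by simp
    show ?thesis unfolding exp_diff e4 e2' ..
  qed
  also have "\<dots> = (1 + w^2) / 2"
  proof -
    have gen: "\<And>a b::complex. a \<noteq> 0 \<Longrightarrow> (a * b / 4) / (a / 2) = b / 2" by (simp add: field_simps)
    show ?thesis by (rule gen[OF w1])
  qed
  also have "\<dots> = exp (ln (1 + w^2) - of_real (ln 2))"
    unfolding exp_diff e2 using w2 by simp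
  finally show "exp (logbr 4 w - logbr 2 w) = exp (ln (1 + w^2) - of_real (ln 2))" .
next
  have "ln (4::real) = ln 2 + ln 2" using ln_mult[of 2 2] by simp
  then show "logbr 4 0 - logbr 2 0 = ln (1 + 0^2) - of_real (ln 2)"
    by (simp add: logbr_0)
qed

lemma u_eq: "(\<lambda>j. h 4 j - h 2 j) = cc"
proof -
  have "(\<lambda>j. h 4 j - h 2 j) = taylor_coeff (G 4 2)" by (rule h_diff) auto
  also have "\<dots> = taylor_coeff (\<lambda>z. (ln (1 + z^2) - of_real (ln 2)) / (1 - z))"
    by (rule tc_cong[of 1]) (auto simp: G_def L42)
  also have "\<dots> = cc" by (rule tc_powser[of 1]) (auto intro: cc_series)
  finally show ?thesis .
qed

lemma u_H2: "(\<lambda>j. h 4 j - h 2 j) \<in> H2"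
  using u_eq cc_H2 by simp

lemma cmod_diff_sq: "(cmod (a - b))^2 = (cmod a)^2 + (cmod b)^2 - 2 * Re (a * cnj b)"
  by (simp add: cmod_power2 power2_diff algebra_simps)

lemma pyth:
  assumes x: "x \<in> H2" and u: "u \<in> H2" and o: "h2_inner x u = 0"
  shows "h2_norm u \<le> h2_norm (\<lambda>j. x j - u j)"
proof -
  have sx: "summable (\<lambda>j. (cmod (x j))^2)" and su: "summable (\<lambda>j. (cmod (u j))^2)"
    using x u by (auto simp: H2_def)
  have si: "(\<lambda>j. x j * cnj (u j)) sums 0"
    using summable_sums[OF H2_prod_summable(2)[OF x u]] o unfolding h2_inner_def by simp
  have sr: "(\<lambda>j. Re (x j * cnj (u j))) sums 0" using sums_Re[OF si] by simp
  have "(\<lambda>j. (cmod (x j))^2 + (cmod (u j))^2 - 2 * Re (x j * cnj (u j))) sums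
        ((\<Sum>j. (cmod (x j))^2) + (\<Sum>j. (cmod (u j))^2) - 2 * 0)"
    by (intro sums_diff sums_add sums_mult summable_sums sx su sr)
  then have "(\<Sum>j. (cmod (x j - u j))^2) = (\<Sum>j. (cmod (x j))^2) + (\<Sum>j. (cmod (u j))^2)"
    unfolding cmod_diff_sq by (simp add: sums_iff)
  moreover have "0 \<le> (\<Sum>j. (cmod (x j))^2)" by (intro suminf_nonneg sx) simp
  ultimately show ?thesis unfolding h2_norm_def by (simp add: real_sqrt_le_mono)
qed

lemma norm_pos: assumes "u \<in> H2" "u 0 \<noteq> 0" shows "h2_norm u > 0"
proof -
  have s: "summable (\<lambda>j. (cmod (u j))^2)" using assms by (simp add: H2_def)
  have "sum (\<lambda>j. (cmod (u j))^2) {0} \<le> (\<Sum>j. (cmod (u j))^2)"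
    by (rule sum_le_suminf[OF s]) auto
  then have "(cmod (u 0))^2 \<le> (\<Sum>j. (cmod (u j))^2)" by simp
  moreover have "(cmod (u 0))^2 > 0" using assms by simp
  ultimately have "(\<Sum>j. (cmod (u j))^2) > 0" by linarith
  then show ?thesis unfolding h2_norm_def by simp
qed

theorem mainTheorem19:
  fixes n :: nat
  assumes "n \<ge> 2"
  shows "Mperp \<inter> HC (Wstar n) = {}"
proof (rule ccontr)
  assume "Mperp \<inter> HC (Wstar n) \<noteq> {}"
  then obtain f where fM: "f \<in> Mperp" and fH: "f \<in> HC (Wstar n)" by blast
  have n: "n \<ge> 1" using assms by simp
  have f: "f \<in> H2" using fM by (simp add: Mperp_def)
  define u where "u = (\<lambda>j. h 4 j - h 2 j)"
  have u: "u \<in> H2" unfolding u_def by (rule u_H2)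
  have up: "h2_norm u > 0" using norm_pos[OF u] u0 unfolding u_def by simp
  obtain m where m: "h2_norm (\<lambda>j. (Wstar n ^^ m) f j - u j) < h2_norm u"
    using fH u up unfolding HC_def by blast
  define x where "x = (Wstar n ^^ m) f"
  have x: "x \<in> H2" and xi: "h2_inner x u = h2_inner f ((W n ^^ m) u)"
    using orbit[OF n f, of m] u unfolding x_def by auto
  have p: "n ^ m \<ge> 1" using n by simp
  have "(W n ^^ m) u \<in> Mspace"
    unfolding Mspace_def cspan_seq_def
  proof (intro CollectI exI conjI)
    let ?g = "\<lambda>j. h (4 * n ^ m) j - h (2 * n ^ m) j"
    show "finite {?g}" by simp
    show "{?g} \<subseteq> {(\<lambda>j. h k j - h l j) | k l. k \<ge> 2 \<and> l \<ge> 2}"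
      using p by force
    show "(W n ^^ m) u = (\<lambda>j. \<Sum>g\<in>{?g}. (\<lambda>_. 1) g * g j)"
      unfolding u_def W_pow[OF n] by simp
  qed
  then have "h2_inner f ((W n ^^ m) u) = 0" using fM by (simp add: Mperp_def)
  then have "h2_norm u \<le> h2_norm (\<lambda>j. x j - u j)" using pyth[OF x u] xi by simp
  then show False using m unfolding x_def by simp
qed

end
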